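(* Let $d\in\{1,2,3\}$ and let $K\subset M^{m\times n}$ be a $d$-dimensional subspace without Rank-$1$ connections, with $K=P_K(\mathbb{R}^d)$ where $P_K(z)=(a_{ij}\cdot z)_{1\le i\le m,1\le j\le n}$, $a_{ij}\in\mathbb{R}^d$, is a linear isomorphism onto $K$. If $\dim\mathrm{Span}\{a_{i_0l}:l=1,\dots,n\}=1$ for some $i_0$, or $\dim\mathrm{Span}\{a_{lj_0}:l=1,\dots,m\}=1$ for some $j_0$, then there exists $\beta\in\mathbb{R}^{q_0}\setminus\{0\}$ with $\sum_{k=1}^{q_0}\beta_kM_k(X)\ge0$ for all $X\in K$ and $\sum_k\beta_kM_k\not\equiv0$ on $K$, where $M_1,\dots,M_{q_0}$ are all the $2\times2$ minors of $m\times n$ matrices.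
   Context: A set has Rank-$1$ connections if it contains $A\ne B$ with $\mathrm{Rank}(A-B)=1$. *)

theory Defs
  imports "HOL-Analysis.Analysis"
begin

definition has_rank_one_connections :: "(real^'n^'m) set \<Rightarrow> bool" where
  "has_rank_one_connections K \<longleftrightarrow> (\<exists>A\<in>K. \<exists>B\<in>K. A \<noteq> B \<and> rank (A - B) = 1)"

definition minor_idx :: "('m::linorder \<times> 'm \<times> 'n::linorder \<times> 'n) set" where
  "minor_idx = {(i1, i2, j1, j2). i1 < i2 \<and> j1 < j2}"

definition minor2 :: "real^'n^'m \<Rightarrow> ('m \<times> 'm \<times> 'n \<times> 'n) \<Rightarrow> real" where
  "minor2 X q = (case q of (i1, i2, j1, j2) \<Rightarrow>
      X$i1$j1 * X$i2$j2 - X$i1$j2 * X$i2$j1)"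

definition PK :: "('m \<Rightarrow> 'n \<Rightarrow> real^'d) \<Rightarrow> real^'d \<Rightarrow> real^'n^'m" where
  "PK a z = (\<chi> i j. a i j \<bullet> z)"

end

theory Submission
  imports Defs
begin

definition m4 :: "real^'n^'m \<Rightarrow> 'm \<Rightarrow> 'm \<Rightarrow> 'n \<Rightarrow> 'n \<Rightarrow> real" where
 "m4 X i1 i2 j1 j2 = X$i1$j1 * X$i2$j2 - X$i1$j2 * X$i2$j1"

definition rep :: "(real^'n::{finite,linorder}^'m::{finite,linorder} \<Rightarrow> real) \<Rightarrow> bool" where
 "rep f \<longleftrightarrow> (\<exists>\<beta>. \<forall>X. f X = (\<Sum>q\<in>minor_idx. \<beta> q * minor2 X q))"

lemma rep_zero: "rep (\<lambda>X. 0)"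
  unfolding rep_def by (rule exI[of _ "\<lambda>q. 0"]) simp

lemma rep_scale: "rep f \<Longrightarrow> rep (\<lambda>X. t * f X)"
  unfolding rep_def
proof (elim exE)
  fix \<beta> assume h: "\<forall>X. f X = (\<Sum>q\<in>minor_idx. \<beta> q * minor2 X q)"
  show "\<exists>\<beta>. \<forall>X. t * f X = (\<Sum>q\<in>minor_idx. \<beta> q * minor2 X q)"
    by (rule exI[of _ "\<lambda>q. t * \<beta> q"]) (simp add: h sum_distrib_left mult.assoc)
qed

lemma rep_add: "rep f \<Longrightarrow> rep g \<Longrightarrow> rep (\<lambda>X. f X + g X)"
  unfolding rep_def
proof (elim exE)
  fix \<beta> \<gamma> assume h: "\<forall>X. f X = (\<Sum>q\<in>minor_idx. \<beta> q * minor2 X q)"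
    and g: "\<forall>X. g X = (\<Sum>q\<in>minor_idx. \<gamma> q * minor2 X q)"
  show "\<exists>\<beta>. \<forall>X. f X + g X = (\<Sum>q\<in>minor_idx. \<beta> q * minor2 X q)"
    by (rule exI[of _ "\<lambda>q. \<beta> q + \<gamma> q"]) (simp add: h g sum.distrib distrib_right)
qed

lemma rep_sum: "finite S \<Longrightarrow> (\<And>s. s \<in> S \<Longrightarrow> rep (f s)) \<Longrightarrow> rep (\<lambda>X. \<Sum>s\<in>S. f s X)"
proof (induction S rule: finite_induct)
  case empty
  then show ?case by (simp add: rep_zero)
next
  case (insert x F)
  have "rep (\<lambda>X. f x X + (\<Sum>s\<in>F. f s X))"
    using insert by (intro rep_add) auto
  then show ?case using insert by simp
qed

lemma finite_minor_idx: "finite (minor_idx :: ('m::{finite,linorder} \<times> 'm \<times> 'n::{finite,linorder} \<times> 'n) set)"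
  by (rule finite_subset[OF subset_UNIV]) simp

lemma rep_m4_lt:
  fixes i1 i2 :: "'m::{finite,linorder}" and j1 j2 :: "'n::{finite,linorder}"
  assumes "i1 < i2" "j1 < j2"
  shows "rep (\<lambda>X. m4 X i1 i2 j1 j2)"
  unfolding rep_def
proof (rule exI[of _ "\<lambda>q. if q = (i1,i2,j1,j2) then 1 else 0"], intro allI)
  fix X
  have "(\<Sum>q\<in>minor_idx. (if q = (i1,i2,j1,j2) then 1 else 0) * minor2 X q)
      = (\<Sum>q\<in>minor_idx. (if q = (i1,i2,j1,j2) then minor2 X q else 0))"
    by (rule sum.cong) auto
  also have "\<dots> = minor2 X (i1,i2,j1,j2)"
    using assms finite_minor_idx by (simp add: sum.delta' minor_idx_def)
  finally show "m4 X i1 i2 j1 j2 = (\<Sum>q\<in>minor_idx. (if q = (i1,i2,j1,j2) then 1 else 0) * minor2 X q)"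
    by (simp add: m4_def minor2_def)
qed

lemma rep_m4:
  fixes i1 i2 :: "'m::{finite,linorder}" and j1 j2 :: "'n::{finite,linorder}"
  shows "rep (\<lambda>X. m4 X i1 i2 j1 j2)"
proof -
  have rowswap: "rep (\<lambda>X. m4 X i1 i2 j1 j2)" if "rep (\<lambda>X. m4 X i2 i1 j1 j2)" for i1 i2 :: 'm and j1 j2 :: 'n
  proof -
    have "rep (\<lambda>X. (-1) * m4 X i2 i1 j1 j2)" using rep_scale[OF that] .
    moreover have "(\<lambda>X. (-1) * m4 X i2 i1 j1 j2) = (\<lambda>X. m4 X i1 i2 j1 j2)"
      by (auto simp: m4_def)
    ultimately show ?thesis by simp
  qed
  have colswap: "rep (\<lambda>X. m4 X i1 i2 j1 j2)" if "rep (\<lambda>X. m4 X i1 i2 j2 j1)" for i1 i2 :: 'm and j1 j2 :: 'n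
  proof -
    have "rep (\<lambda>X. (-1) * m4 X i1 i2 j2 j1)" using rep_scale[OF that] .
    moreover have "(\<lambda>X. (-1) * m4 X i1 i2 j2 j1) = (\<lambda>X. m4 X i1 i2 j1 j2)"
      by (auto simp: m4_def)
    ultimately show ?thesis by simp
  qed
  have eqi: "rep (\<lambda>X. m4 X i i j1 j2)" for i :: 'm and j1 j2 :: 'n
  proof -
    have "(\<lambda>X. m4 X i i j1 j2) = (\<lambda>X. 0)" by (auto simp: m4_def)
    then show ?thesis using rep_zero by simp
  qed
  have eqj: "rep (\<lambda>X. m4 X i1 i2 j j)" for i1 i2 :: 'm and j :: 'n
  proof -
    have "(\<lambda>X. m4 X i1 i2 j j) = (\<lambda>X. 0)" by (auto simp: m4_def)
    then show ?thesis using rep_zero by simp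
  qed
  show ?thesis
  proof (cases i1 i2 rule: linorder_cases)
    case less
    then show ?thesis
      by (cases j1 j2 rule: linorder_cases) (auto intro: rep_m4_lt colswap eqj)
  next
    case equal
    then show ?thesis using eqi by simp
  next
    case greater
    then show ?thesis
      by (cases j1 j2 rule: linorder_cases) (auto intro: rep_m4_lt colswap eqj rowswap)
  qed
qed


lemma mat_expand: "(Y::real^'n^'m) = (\<Sum>i\<in>UNIV. \<Sum>j\<in>UNIV. Y $ i $ j *\<^sub>R axis i (axis j (1::real)))"
proof -
  have "(\<Sum>i\<in>UNIV. \<Sum>j\<in>UNIV. Y $ i $ j *\<^sub>R axis i (axis j (1::real))) $ k $ l = Y $ k $ l" for k l
  proof -
    have "(\<Sum>i\<in>UNIV. \<Sum>j\<in>UNIV. Y $ i $ j *\<^sub>R axis i (axis j (1::real))) $ k $ l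
       = (\<Sum>i\<in>UNIV. \<Sum>j\<in>UNIV. (if i = k \<and> j = l then Y $ i $ j else 0))"
      by (simp add: sum_component axis_def) (intro sum.cong refl, auto)
    also have "\<dots> = (\<Sum>i\<in>UNIV. if i = k then Y $ i $ l else 0)"
      by (rule sum.cong) (auto simp: sum.delta')
    also have "\<dots> = Y $ k $ l" by (simp add: sum.delta')
    finally show ?thesis .
  qed
  then show ?thesis by (simp add: vec_eq_iff)
qed

lemma linear_PK: "linear (PK a)"
  by (rule linearI) (auto simp: PK_def vec_eq_iff inner_add_right)

lemma row_case:
  fixes a :: "'m::{finite,linorder} \<Rightarrow> 'n::{finite,linorder} \<Rightarrow> real^'d"
  assumes inj: "inj (PK a)"
    and norank1: "\<not> has_rank_one_connections (range (PK a))"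
    and i0: "dim (span (range (a i0))) = 1"
  shows "\<exists>\<beta>. (\<forall>X\<in>range (PK a). (\<Sum>q\<in>minor_idx. \<beta> q * minor2 X q) \<ge> 0) \<and>
           (\<exists>X\<in>range (PK a). (\<Sum>q\<in>minor_idx. \<beta> q * minor2 X q) \<noteq> 0)"
proof -
  obtain B where B: "B \<subseteq> span (range (a i0))" "independent B" "span (range (a i0)) \<subseteq> span B" "card B = 1"
    using basis_exists[of "span (range (a i0))"] i0 by metis
  then obtain v where Bv: "B = {v}" using card_1_singletonE by blast
  have v0: "v \<noteq> 0" using B(2) Bv by auto
  have "\<forall>l. \<exists>t. a i0 l = t *\<^sub>R v"
  proof
    fix l
    have "a i0 l \<in> span {v}" using B(3) Bv span_base[of "a i0 l" "range (a i0)"] by auto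
    then show "\<exists>t. a i0 l = t *\<^sub>R v" by (auto simp: span_singleton)
  qed
  then obtain c where c: "\<And>l. a i0 l = c l *\<^sub>R v" by metis
  have "\<not> range (a i0) \<subseteq> {0}" using i0 dim_eq_0[of "range (a i0)"] by auto
  then obtain js where js: "c js \<noteq> 0" using c by fastforce
  define X where "X z = PK a z" for z
  have Xi0: "X z $ i0 $ j = c j * (v \<bullet> z)" for z j by (simp add: X_def PK_def c)
  define Y where "Y z = (\<chi> i j. c js * X z $ i $ j - c j * X z $ i $ js)" for z
  have linY: "linear Y"
    by (rule linearI) (auto simp: Y_def X_def PK_def vec_eq_iff inner_add_right algebra_simps)
  have injY: "inj Y"
    unfolding linear_inj_iff_eq_0[OF linY]
  proof (intro allI impI)
    fix z assume Yz: "Y z = 0"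
    define cv where "cv = (\<chi> j. c j)"
    have rowX: "X z $ i = (X z $ i $ js / c js) *\<^sub>R cv" for i
    proof -
      have "c js * X z $ i $ j - c j * X z $ i $ js = 0" for j
        using Yz unfolding Y_def vec_eq_iff by auto
      then show ?thesis using js by (auto simp: vec_eq_iff cv_def field_simps)
    qed
    have "rows (X z) \<subseteq> span {cv}"
      unfolding rows_def row_def using rowX
      by (auto simp: span_singleton vec_lambda_eta)
    then have "dim (rows (X z)) \<le> card {cv}" by (intro dim_le_card) auto
    then have r1: "rank (X z) \<le> 1" by (simp add: row_rank_def)
    show "z = 0"
    proof (rule ccontr)
      assume "z \<noteq> 0"
      then have "X z \<noteq> 0" using inj linear_inj_iff_eq_0[OF linear_PK] X_def by metis
      then have "rank (X z) = 1" using r1 rank_eq_0[of "X z"] by linarith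
      moreover have "X z \<in> range (PK a)" "0 \<in> range (PK a)"
        using X_def linear_0[OF linear_PK, of a] by auto
      ultimately have "has_rank_one_connections (range (PK a))"
        unfolding has_rank_one_connections_def using \<open>X z \<noteq> 0\<close> by (metis diff_zero)
      then show False using norank1 by simp
    qed
  qed
  obtain g where g: "linear g" "g \<circ> Y = id" using linear_injective_left_inverse[OF linY injY] by blast
  define w where "w i j = v \<bullet> g (axis i (axis j 1))" for i j
  have vz: "v \<bullet> z = (\<Sum>i\<in>UNIV. \<Sum>j\<in>UNIV. Y z $ i $ j * w i j)" for z
  proof -
    have exp: "Y z = (\<Sum>i\<in>UNIV. \<Sum>j\<in>UNIV. Y z $ i $ j *\<^sub>R axis i (axis j (1::real)))"
      by (rule mat_expand)
    have "v \<bullet> z = v \<bullet> g (Y z)" using g(2) by (metis comp_apply id_apply)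
    also have "\<dots> = v \<bullet> (\<Sum>i\<in>UNIV. \<Sum>j\<in>UNIV. Y z $ i $ j *\<^sub>R g (axis i (axis j 1)))"
      by (subst exp) (simp add: linear_sum[OF g(1)] linear_scale[OF g(1)])
    also have "\<dots> = (\<Sum>i\<in>UNIV. \<Sum>j\<in>UNIV. Y z $ i $ j * w i j)"
      by (simp add: inner_sum_right w_def)
    finally show ?thesis .
  qed
  define F where "F M = (\<Sum>i\<in>UNIV. \<Sum>j\<in>UNIV. (- w i j) * m4 M i0 i j js)" for M
  have repF: "rep F"
    unfolding F_def by (intro rep_sum rep_scale rep_m4) auto
  have FX: "F (X z) = (v \<bullet> z)^2" for z
  proof -
    have m: "m4 (X z) i0 i j js = - (v \<bullet> z) * Y z $ i $ j" for i j
      by (simp add: m4_def Xi0 Y_def algebra_simps)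
    have "F (X z) = (v \<bullet> z) * (\<Sum>i\<in>UNIV. \<Sum>j\<in>UNIV. Y z $ i $ j * w i j)"
      by (simp add: F_def m sum_distrib_left algebra_simps)
    then show ?thesis using vz by (simp add: power2_eq_square)
  qed
  obtain \<beta> where \<beta>: "\<And>M. F M = (\<Sum>q\<in>minor_idx. \<beta> q * minor2 M q)" using repF rep_def by metis
  show ?thesis
  proof (intro exI[of _ \<beta>] conjI)
    show "\<forall>M\<in>range (PK a). 0 \<le> (\<Sum>q\<in>minor_idx. \<beta> q * minor2 M q)"
      using FX \<beta> X_def by (metis image_iff zero_le_power2)
    have "F (X v) \<noteq> 0" using FX v0 by simp
    then show "\<exists>M\<in>range (PK a). (\<Sum>q\<in>minor_idx. \<beta> q * minor2 M q) \<noteq> 0"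
      using \<beta> X_def by auto
  qed
qed


lemma sum_transpose:
  fixes \<beta>' :: "'n::{finite,linorder} \<times> 'n \<times> 'm::{finite,linorder} \<times> 'm \<Rightarrow> real"
    and X :: "real^'n::{finite,linorder}^'m::{finite,linorder}"
  shows "(\<Sum>q\<in>minor_idx. (case q of (i1,i2,j1,j2) \<Rightarrow> \<beta>' (j1,j2,i1,i2)) * minor2 X q)
       = (\<Sum>q\<in>minor_idx. \<beta>' q * minor2 (transpose X) q)"
  by (rule sum.reindex_bij_witness[where i="\<lambda>(j1,j2,i1,i2). (i1,i2,j1,j2)" and j="\<lambda>(i1,i2,j1,j2). (j1,j2,i1,i2)"])
     (auto simp: minor_idx_def minor2_def transpose_def)

lemma PK_transpose: "PK (\<lambda>j i. a i j) z = transpose (PK a z)"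
  by (simp add: PK_def transpose_def vec_eq_iff)

theorem lemma4:
  fixes K :: "(real^'n::{finite,linorder}^'m::{finite,linorder}) set"
    and a :: "'m \<Rightarrow> 'n \<Rightarrow> real^'d"
  assumes d: "CARD('d) \<in> {1, 2, 3}"
    and sub: "subspace K"
    and dimK: "dim K = CARD('d)"
    and norank1: "\<not> has_rank_one_connections K"
    and iso: "inj (PK a)" "range (PK a) = K"
    and span1: "(\<exists>i0. dim (span (range (a i0))) = 1) \<or>
                (\<exists>j0. dim (span (range (\<lambda>l. a l j0))) = 1)"
  shows "\<exists>\<beta> :: ('m \<times> 'm \<times> 'n \<times> 'n) \<Rightarrow> real.
           (\<exists>q\<in>minor_idx. \<beta> q \<noteq> 0) \<and>
           (\<forall>X\<in>K. (\<Sum>q\<in>minor_idx. \<beta> q * minor2 X q) \<ge> 0) \<and>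
           (\<exists>X\<in>K. (\<Sum>q\<in>minor_idx. \<beta> q * minor2 X q) \<noteq> 0)"
proof -
  have weak: "\<exists>\<beta> :: ('m \<times> 'm \<times> 'n \<times> 'n) \<Rightarrow> real.
           (\<forall>X\<in>K. (\<Sum>q\<in>minor_idx. \<beta> q * minor2 X q) \<ge> 0) \<and>
           (\<exists>X\<in>K. (\<Sum>q\<in>minor_idx. \<beta> q * minor2 X q) \<noteq> 0)"
    using span1
  proof
    assume "\<exists>i0. dim (span (range (a i0))) = 1"
    then obtain i0 where "dim (span (range (a i0))) = 1" by blast
    then show ?thesis using row_case[of a i0] iso norank1 by auto
  next
    assume "\<exists>j0. dim (span (range (\<lambda>l. a l j0))) = 1"
    then obtain j0 where j0: "dim (span (range (\<lambda>l. a l j0))) = 1" by blast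
    define a' where "a' = (\<lambda>j i. a i j)"
    have PKa': "PK a' z = transpose (PK a z)" for z unfolding a'_def by (rule PK_transpose)
    have inj': "inj (PK a')"
      using iso(1) unfolding inj_def PKa' by (metis transpose_transpose)
    have nr': "\<not> has_rank_one_connections (range (PK a'))"
    proof
      assume "has_rank_one_connections (range (PK a'))"
      then obtain z1 z2 where "PK a' z1 \<noteq> PK a' z2" "rank (PK a' z1 - PK a' z2) = 1"
        unfolding has_rank_one_connections_def by auto
      moreover have "transpose A - transpose B = transpose (A - B)" for A B :: "real^'n::{finite,linorder}^'m::{finite,linorder}"
        by (simp add: transpose_def vec_eq_iff)
      ultimately have "PK a z1 \<noteq> PK a z2" "rank (PK a z1 - PK a z2) = 1"
        unfolding PKa' by (auto simp: rank_transpose)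
      then have "has_rank_one_connections K"
        unfolding has_rank_one_connections_def using iso(2) by blast
      then show False using norank1 by simp
    qed
    have "dim (span (range (a' j0))) = 1" using j0 unfolding a'_def .
    then obtain \<beta>' where \<beta>':
      "\<forall>X\<in>range (PK a'). (\<Sum>q\<in>minor_idx. \<beta>' q * minor2 X q) \<ge> 0"
      "\<exists>X\<in>range (PK a'). (\<Sum>q\<in>minor_idx. \<beta>' q * minor2 X q) \<noteq> 0"
      using row_case[of a' j0] inj' nr' by blast
    define \<beta> where "\<beta> q = (case q of (i1,i2,j1,j2) \<Rightarrow> \<beta>' (j1,j2,i1,i2))" for q :: "'m \<times> 'm \<times> 'n \<times> 'n"
    have eq: "(\<Sum>q\<in>minor_idx. \<beta> q * minor2 X q) = (\<Sum>q\<in>minor_idx. \<beta>' q * minor2 (transpose X) q)" for X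
      unfolding \<beta>_def by (rule sum_transpose)
    show ?thesis
    proof (intro exI[of _ \<beta>] conjI)
      show "\<forall>X\<in>K. 0 \<le> (\<Sum>q\<in>minor_idx. \<beta> q * minor2 X q)"
        using \<beta>'(1) iso(2) eq PKa' by auto
      from \<beta>'(2) obtain z where "(\<Sum>q\<in>minor_idx. \<beta>' q * minor2 (PK a' z) q) \<noteq> 0" by auto
      then show "\<exists>X\<in>K. (\<Sum>q\<in>minor_idx. \<beta> q * minor2 X q) \<noteq> 0"
        using iso(2) eq PKa' by auto
    qed
  qed
  then obtain \<beta> :: "('m \<times> 'm \<times> 'n \<times> 'n) \<Rightarrow> real" where
    b1: "\<forall>X\<in>K. (\<Sum>q\<in>minor_idx. \<beta> q * minor2 X q) \<ge> 0" and
    b2: "\<exists>X\<in>K. (\<Sum>q\<in>minor_idx. \<beta> q * minor2 X q) \<noteq> 0" by blast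
  have "\<exists>q\<in>minor_idx. \<beta> q \<noteq> 0"
  proof (rule ccontr)
    assume "\<not> ?thesis"
    then have "(\<Sum>q\<in>minor_idx. \<beta> q * minor2 X q) = 0" for X by simp
    then show False using b2 by simp
  qed
  then show ?thesis using b1 b2 by blast
qed

end
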